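(* Fix integers $p\ge 3$, $q\ge 1$ and a real $\eta$ with $0<\eta<\frac{1}{7p^5q}$. For all sufficiently large $n$, for the graph $G$ and partition $V_1,\dots,V_p$ described in the context, the set $W=\bigcup_{i=1}^p W_i$, where $W_i=\{v\in V_i: d_{V_i}(v)\ge 2\eta n\}$, satisfies $|W|\le \frac12\eta n$.
   Context: $B_{p,q}=K_p\nabla qK_1$ is the join of a clique $K_p$ and an independent set of $q$ vertices. $\mathcal{G}(n,p,q)$ is the set of $n$-vertex graphs with chromatic number greater than $p$ that contain no subgraph isomorphic to $B_{p,q}$ and have the maximum number of edges among all such graphs. $G$ is a graph in $\mathcal{G}(n,p,q)$ whose minimum degree equals $\min_{F\in\mathcal{G}(n,p,q)}\delta(F)$. For $U\subseteq V(G)$, $e(U)$ is the number of edges of $G$ with both ends in $U$, and $d_U(v)=|N_G(v)\cap U|$. $V(G)=V_1\cup\cdots\cup V_p$ is a vertex partition of $G$ into $p$ parts minimizing $\sum_{i=1}^p e(V_i)$ among all partitions of $V(G)$ into $p$ parts. *)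

theory Defs
  imports Complex_Main
begin

definition simple_graph :: "nat \<Rightarrow> nat set set \<Rightarrow> bool" where
  "simple_graph n E \<longleftrightarrow> (\<forall>e\<in>E. e \<subseteq> {..<n} \<and> card e = 2)"

definition colorable :: "nat \<Rightarrow> nat set set \<Rightarrow> nat \<Rightarrow> bool" where
  "colorable n E k \<longleftrightarrow> (\<exists>c::nat \<Rightarrow> nat. (\<forall>v<n. c v < k) \<and>
      (\<forall>u v. {u, v} \<in> E \<longrightarrow> u \<noteq> v \<longrightarrow> c u \<noteq> c v))"

definition chromatic_number :: "nat \<Rightarrow> nat set set \<Rightarrow> nat" where
  "chromatic_number n E = (LEAST k. colorable n E k)"

(* G contains a (not necessarily induced) subgraph isomorphic to B_{p,q} = K_p join qK_1 *)
definition contains_book :: "nat \<Rightarrow> nat set set \<Rightarrow> nat \<Rightarrow> nat \<Rightarrow> bool" where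
  "contains_book n E p q \<longleftrightarrow> (\<exists>K Q. K \<subseteq> {..<n} \<and> Q \<subseteq> {..<n} \<and> K \<inter> Q = {} \<and>
      card K = p \<and> card Q = q \<and>
      (\<forall>u\<in>K. \<forall>v\<in>K. u \<noteq> v \<longrightarrow> {u, v} \<in> E) \<and>
      (\<forall>u\<in>K. \<forall>v\<in>Q. {u, v} \<in> E))"

definition admissible :: "nat \<Rightarrow> nat \<Rightarrow> nat \<Rightarrow> nat set set \<Rightarrow> bool" where
  "admissible n p q E \<longleftrightarrow> simple_graph n E \<and> chromatic_number n E > p \<and> \<not> contains_book n E p q"

definition in_GG :: "nat \<Rightarrow> nat \<Rightarrow> nat \<Rightarrow> nat set set \<Rightarrow> bool" where
  "in_GG n p q E \<longleftrightarrow> admissible n p q E \<and> (\<forall>E'. admissible n p q E' \<longrightarrow> card E' \<le> card E)"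

definition degree :: "nat set set \<Rightarrow> nat \<Rightarrow> nat" where
  "degree E v = card {u. {u, v} \<in> E \<and> u \<noteq> v}"

definition min_degree :: "nat \<Rightarrow> nat set set \<Rightarrow> nat" where
  "min_degree n E = Min (degree E ` {..<n})"

definition deg_in :: "nat set set \<Rightarrow> nat set \<Rightarrow> nat \<Rightarrow> nat" where
  "deg_in E U v = card {u\<in>U. {u, v} \<in> E \<and> u \<noteq> v}"

definition edges_in :: "nat set set \<Rightarrow> nat set \<Rightarrow> nat" where
  "edges_in E U = card {e\<in>E. e \<subseteq> U}"

definition is_partition :: "nat \<Rightarrow> nat \<Rightarrow> (nat \<Rightarrow> nat set) \<Rightarrow> bool" where
  "is_partition n p V \<longleftrightarrow> (\<Union>i<p. V i) = {..<n} \<and>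
      (\<forall>i<p. \<forall>j<p. i \<noteq> j \<longrightarrow> V i \<inter> V j = {})"

definition part_cost :: "nat set set \<Rightarrow> nat \<Rightarrow> (nat \<Rightarrow> nat set) \<Rightarrow> nat" where
  "part_cost E p V = (\<Sum>i<p. edges_in E (V i))"

definition optimal_partition :: "nat \<Rightarrow> nat set set \<Rightarrow> nat \<Rightarrow> (nat \<Rightarrow> nat set) \<Rightarrow> bool" where
  "optimal_partition n E p V \<longleftrightarrow> is_partition n p V \<and>
      (\<forall>V'. is_partition n p V' \<longrightarrow> part_cost E p V \<le> part_cost E p V')"

end

theory Submission
  imports Defs
begin


definition adjE :: "nat set set \<Rightarrow> nat \<Rightarrow> nat \<Rightarrow> nat" where
  "adjE E u v = (if {u,v} \<in> E \<and> u \<noteq> v then 1 else 0)"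

lemma adjE_sym: "adjE E u v = adjE E v u"
  unfolding adjE_def by (simp add: insert_commute eq_commute)

lemma deg_in_sum: "finite U \<Longrightarrow> deg_in E U v = (\<Sum>u\<in>U. adjE E u v)"
  unfolding deg_in_def adjE_def
  by (simp add: sum.If_cases Int_def)

lemma card_inc: 
  assumes "v \<in> U" "\<forall>e\<in>E. card e = 2"
  shows "card {e\<in>{e\<in>E. e \<subseteq> U}. v \<in> e} = deg_in E U v"
proof -
  have "bij_betw (\<lambda>u. {u,v}) {u\<in>U. {u, v} \<in> E \<and> u \<noteq> v} {e\<in>{e\<in>E. e \<subseteq> U}. v \<in> e}"
  proof (rule bij_betwI')
    show "\<And>x y. x \<in> {u \<in> U. {u, v} \<in> E \<and> u \<noteq> v} \<Longrightarrow> y \<in> {u \<in> U. {u, v} \<in> E \<and> u \<noteq> v} \<Longrightarrow> ({x, v} = {y, v}) = (x = y)"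
      by (auto simp: doubleton_eq_iff)
    show "\<And>x. x \<in> {u \<in> U. {u, v} \<in> E \<and> u \<noteq> v} \<Longrightarrow> {x, v} \<in> {e \<in> {e \<in> E. e \<subseteq> U}. v \<in> e}"
      using assms by auto
    fix e assume e: "e \<in> {e \<in> {e \<in> E. e \<subseteq> U}. v \<in> e}"
    then have "card e = 2" using assms by auto
    then obtain a b where ab: "e = {a,b}" "a \<noteq> b" by (auto simp: card_2_iff)
    show "\<exists>x\<in>{u \<in> U. {u, v} \<in> E \<and> u \<noteq> v}. e = {x, v}"
    proof (cases "a = v")
      case True thus ?thesis using e ab by (intro bexI[of _ b]) (auto simp: insert_commute)
    next
      case False thus ?thesis using e ab by (intro bexI[of _ a]) auto
    qed
  qed
  then show ?thesis unfolding deg_in_def by (simp add: bij_betw_same_card)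
qed

lemma handshake:
  assumes "finite U" "\<forall>e\<in>E. card e = 2"
  shows "(\<Sum>v\<in>U. deg_in E U v) = 2 * edges_in E U"
proof -
  define EU where "EU = {e\<in>E. e \<subseteq> U}"
  have fin: "finite EU" unfolding EU_def
    by (rule finite_subset[of _ "Pow U"]) (use assms in auto)
  have "2 * edges_in E U = (\<Sum>e\<in>EU. card e)"
    using assms unfolding edges_in_def EU_def by simp
  also have "\<dots> = (\<Sum>e\<in>EU. \<Sum>v\<in>U. if v \<in> e then 1 else 0)"
  proof (rule sum.cong[OF refl])
    fix e assume "e \<in> EU"
    then have "e \<subseteq> U" unfolding EU_def by auto
    then have "{v\<in>U. v \<in> e} = e" by auto
    then show "card e = (\<Sum>v\<in>U. if v \<in> e then 1 else 0)"
      using assms(1) \<open>e \<subseteq> U\<close> by (simp add: sum.If_cases Int_absorb1)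
  qed
  also have "\<dots> = (\<Sum>v\<in>U. \<Sum>e\<in>EU. if v \<in> e then 1 else 0)"
    by (rule sum.swap)
  also have "\<dots> = (\<Sum>v\<in>U. deg_in E U v)"
  proof (rule sum.cong[OF refl])
    fix v assume "v \<in> U"
    have "(\<Sum>e\<in>EU. if v \<in> e then 1 else 0) = card {e\<in>EU. v \<in> e}"
      using fin by (simp add: sum.If_cases Int_def)
    also have "\<dots> = deg_in E U v" unfolding EU_def using card_inc[OF \<open>v \<in> U\<close> assms(2)] by simp
    finally show "(\<Sum>e\<in>EU. if v \<in> e then 1 else 0) = deg_in E U v" .
  qed
  finally show ?thesis by simp
qed


definition pick :: "nat set set \<Rightarrow> nat set \<Rightarrow> nat" where
  "pick E S = (SOME x. x \<in> S \<and> (\<forall>y\<in>S. deg_in E S y \<le> deg_in E S x))"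

primrec Aset :: "nat set set \<Rightarrow> nat \<Rightarrow> nat \<Rightarrow> nat set" where
  "Aset E n 0 = {..<n}"
| "Aset E n (Suc i) = {u \<in> Aset E n i. {u, pick E (Aset E n i)} \<in> E \<and> u \<noteq> pick E (Aset E n i)}"

definition lev :: "nat set set \<Rightarrow> nat \<Rightarrow> nat \<Rightarrow> nat \<Rightarrow> nat" where
  "lev E n p v = Max {i. i < p \<and> v \<in> Aset E n i}"

lemma pick_prop:
  assumes "finite S" "S \<noteq> {}"
  shows "pick E S \<in> S \<and> (\<forall>y\<in>S. deg_in E S y \<le> deg_in E S (pick E S))"
proof -
  let ?f = "deg_in E S"
  have "Max (?f ` S) \<in> ?f ` S" using assms by (intro Max_in) auto
  then obtain x where x: "x \<in> S" "?f x = Max (?f ` S)" by auto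
  have "\<forall>y\<in>S. ?f y \<le> ?f x" using x assms by (simp add: Max_ge)
  then have "\<exists>x. x \<in> S \<and> (\<forall>y\<in>S. ?f y \<le> ?f x)" using x by blast
  then show ?thesis unfolding pick_def by (rule someI_ex)
qed

lemma Aset_Suc_sub: "Aset E n (Suc i) \<subseteq> Aset E n i" by auto

lemma Aset_mono: "j \<le> i \<Longrightarrow> Aset E n i \<subseteq> Aset E n j"
proof (induction i)
  case 0 then show ?case by simp
next
  case (Suc i)
  show ?case
  proof (cases "j = Suc i")
    case False
    then have "j \<le> i" using Suc.prems by simp
    then show ?thesis using Suc.IH Aset_Suc_sub[of E n i] by blast
  qed simp
qed

lemma Aset_sub: "Aset E n i \<subseteq> {..<n}"
  using Aset_mono[of 0 i E n] by (simp only: Aset.simps le0 simp_thms)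

lemma Aset_fin: "finite (Aset E n i)"
  by (rule finite_subset[OF Aset_sub]) simp

lemma deg_pick: "deg_in E (Aset E n i) (pick E (Aset E n i)) = card (Aset E n (Suc i))"
  unfolding deg_in_def Aset.simps(2) ..

lemma lev_props:
  assumes "v < n" "p \<ge> 1"
  shows "lev E n p v < p" "\<And>i. i < p \<Longrightarrow> (i \<le> lev E n p v \<longleftrightarrow> v \<in> Aset E n i)"
proof -
  let ?S = "{i. i < p \<and> v \<in> Aset E n i}"
  have fin: "finite ?S" by (intro finite_Collect_conjI disjI1 finite_Collect_less_nat)
  have "0 \<in> ?S" using assms by (simp only: mem_Collect_eq Aset.simps lessThan_iff simp_thms)
  then have ne: "?S \<noteq> {}" by blast
  have M: "lev E n p v \<in> ?S" unfolding lev_def using Max_in[OF fin ne] .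
  then show "lev E n p v < p" by blast
  fix i assume i: "i < p"
  show "i \<le> lev E n p v \<longleftrightarrow> v \<in> Aset E n i"
  proof
    assume "i \<le> lev E n p v"
    moreover have "v \<in> Aset E n (lev E n p v)" using M by blast
    ultimately show "v \<in> Aset E n i" using Aset_mono[of i "lev E n p v" E n] by blast
  next
    assume "v \<in> Aset E n i"
    then have "i \<in> ?S" using i by blast
    then show "i \<le> lev E n p v" unfolding lev_def using fin by (rule Max_ge[rotated])
  qed
qed

lemma Aset_p_small:
  assumes nb: "\<not> contains_book n E p q" and q: "q \<ge> 1"
  shows "card (Aset E n p) < q"
proof (rule ccontr)
  assume "\<not> card (Aset E n p) < q"
  then have cq: "card (Aset E n p) \<ge> q" by simp
  then have ne: "Aset E n p \<noteq> {}" using q by auto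
  define x where "x i = pick E (Aset E n i)" for i
  have xin: "x i \<in> Aset E n i" if "i < p" for i
  proof -
    have "Aset E n p \<subseteq> Aset E n i" using that by (intro Aset_mono) simp
    then have "Aset E n i \<noteq> {}" using ne by auto
    then show ?thesis unfolding x_def using pick_prop[OF Aset_fin] by blast
  qed
  have nb_x: "{u, x i} \<in> E \<and> u \<noteq> x i" if "u \<in> Aset E n j" "i < j" for i j u
  proof -
    have "Aset E n j \<subseteq> Aset E n (Suc i)" using that by (intro Aset_mono) simp
    then have "u \<in> Aset E n (Suc i)" using that(1) by blast
    then show ?thesis unfolding x_def Aset.simps(2) by blast
  qed
  have xx: "{x i, x j} \<in> E \<and> x i \<noteq> x j" if "i < j" "j < p" for i j
    using nb_x[OF xin[OF that(2)] that(1)] by (simp add: insert_commute)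
  obtain Q where Q: "Q \<subseteq> Aset E n p" "card Q = q"
    using cq by (meson obtain_subset_with_card_n)
  have xQ: "{x i, u} \<in> E \<and> u \<noteq> x i" if "i < p" "u \<in> Q" for i u
  proof -
    have "u \<in> Aset E n p" using Q that by blast
    from nb_x[OF this that(1)] show ?thesis by (simp add: insert_commute)
  qed
  define K where "K = x ` {..<p}"
  have inj: "inj_on x {..<p}"
  proof (rule inj_onI)
    fix i j assume ij: "i \<in> {..<p}" "j \<in> {..<p}" "x i = x j"
    show "i = j"
    proof (rule ccontr)
      assume "i \<noteq> j"
      then consider "i < j" | "j < i" by linarith
      then show False
      proof cases
        case 1 then show False using xx[of i j] ij by simp
      next
        case 2 then show False using xx[of j i] ij by simp
      qed
    qed
  qed
  have "contains_book n E p q"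
    unfolding contains_book_def
  proof (intro exI conjI)
    show "K \<subseteq> {..<n}" unfolding K_def using xin Aset_sub by blast
    show "Q \<subseteq> {..<n}" using Q Aset_sub by blast
    show "K \<inter> Q = {}" unfolding K_def using xQ by blast
    show "card K = p" unfolding K_def using inj by (simp add: card_image)
    show "card Q = q" by fact
    show "\<forall>u\<in>K. \<forall>v\<in>K. u \<noteq> v \<longrightarrow> {u, v} \<in> E"
    proof (intro ballI impI)
      fix u v assume "u \<in> K" "v \<in> K" "u \<noteq> v"
      then obtain i j where ij: "i < p" "j < p" "u = x i" "v = x j" unfolding K_def by auto
      then have "i \<noteq> j" using \<open>u \<noteq> v\<close> by blast
      then consider "i < j" | "j < i" by linarith
      then show "{u, v} \<in> E"
      proof cases
        case 1 then show ?thesis using xx[of i j] ij by simp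
      next
        case 2 then show ?thesis using xx[of j i] ij by (simp add: insert_commute)
      qed
    qed
    show "\<forall>u\<in>K. \<forall>v\<in>Q. {u, v} \<in> E"
      unfolding K_def using xQ by blast
  qed
  then show False using nb by simp
qed

lemma simple_card2: "simple_graph n E \<Longrightarrow> \<forall>e\<in>E. card e = 2"
  unfolding simple_graph_def by blast

lemma simple_cardE: "simple_graph n E \<Longrightarrow> edges_in E {..<n} = card E"
  unfolding simple_graph_def edges_in_def
  by (metis (no_types, lifting) Collect_cong Collect_mem_eq)

lemma double_sum_adj:
  assumes "simple_graph n E"
  shows "(\<Sum>v<n. \<Sum>u<n. adjE E u v) = 2 * card E"
proof -
  have "(\<Sum>v<n. \<Sum>u<n. adjE E u v) = (\<Sum>v<n. deg_in E {..<n} v)"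
    by (simp add: deg_in_sum)
  also have "\<dots> = 2 * edges_in E {..<n}"
    using handshake[of "{..<n}" E] simple_card2[OF assms] by simp
  finally show ?thesis using simple_cardE[OF assms] by simp
qed

lemma sum_adj_filter:
  "finite A \<Longrightarrow> (\<Sum>u\<in>A. if P u then adjE E u v else 0) = deg_in E {u\<in>A. P u} v"
  by (simp add: deg_in_sum sum.inter_filter)

lemma furedi:
  assumes sg: "simple_graph n E" and nb: "\<not> contains_book n E p q" and q: "q \<ge> 1" and p: "p \<ge> 1"
  shows "card E + part_cost E p (\<lambda>i. {v\<in>{..<n}. lev E n p v = i})
     \<le> (\<Sum>v<n. card {u\<in>{..<n}. lev E n p v < lev E n p u}) + q * n"
proof -
  define L where "L = lev E n p"
  define F where "F i = {v\<in>{..<n}. L v = i}" for i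
  define a where "a = adjE E"
  have Lp: "L v < p" if "v < n" for v using lev_props(1)[OF that p] unfolding L_def .
  have LA: "(i \<le> L v) = (v \<in> Aset E n i)" if "v < n" "i < p" for v i
    using lev_props(2)[OF that(1) p that(2)] unfolding L_def .
  define X where "X = (\<Sum>v<n. \<Sum>u<n. if L v \<le> L u then a u v else 0)"
  have X2: "X = (\<Sum>v<n. \<Sum>u<n. if L u \<le> L v then a u v else 0)"
    unfolding X_def a_def by (subst sum.swap) (intro sum.cong refl, metis adjE_sym)
  have pc: "2 * part_cost E p F = (\<Sum>v<n. \<Sum>u<n. if L u = L v then a u v else 0)"
  proof -
    have "2 * part_cost E p F = (\<Sum>i<p. 2 * edges_in E (F i))"
      unfolding part_cost_def by (simp add: sum_distrib_left)
    also have "\<dots> = (\<Sum>i<p. \<Sum>v\<in>F i. deg_in E (F i) v)"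
      by (rule sum.cong[OF refl], rule handshake[symmetric]) (auto simp: F_def simple_card2[OF sg])
    also have "\<dots> = (\<Sum>i<p. \<Sum>v\<in>F i. \<Sum>u<n. if L u = L v then a u v else 0)"
    proof (intro sum.cong refl)
      fix i v assume "v \<in> F i"
      then have "{u\<in>{..<n}. L u = L v} = F i" unfolding F_def by auto
      then show "deg_in E (F i) v = (\<Sum>u<n. if L u = L v then a u v else 0)"
        unfolding a_def using sum_adj_filter[of "{..<n}" "\<lambda>u. L u = L v" E v] by simp
    qed
    also have "\<dots> = (\<Sum>v<n. \<Sum>u<n. if L u = L v then a u v else 0)"
      unfolding F_def by (rule sum.group) (auto simp: Lp)
    finally show ?thesis .
  qed
  have twoX: "2 * X = 2 * card E + 2 * part_cost E p F"
  proof -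
    have "2 * X = (\<Sum>v<n. \<Sum>u<n. (if L v \<le> L u then a u v else 0) + (if L u \<le> L v then a u v else 0))"
      by (subst mult_2, subst (2) X2) (simp add: X_def sum.distrib)
    also have "\<dots> = (\<Sum>v<n. \<Sum>u<n. a u v + (if L u = L v then a u v else 0))"
      by (intro sum.cong refl) auto
    also have "\<dots> = 2 * card E + 2 * part_cost E p F"
      unfolding pc using double_sum_adj[OF sg] by (simp add: sum.distrib a_def)
    finally show ?thesis .
  qed
  have Xle: "X \<le> (\<Sum>v<n. card {u\<in>{..<n}. L v < L u} + q)"
    unfolding X_def
  proof (rule sum_mono)
    fix v assume v: "v \<in> {..<n}"
    let ?i = "L v"
    have ip: "?i < p" using Lp v by simp
    have Aeq: "{u\<in>{..<n}. L v \<le> L u} = Aset E n ?i"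
      using LA[OF _ ip] Aset_sub by blast
    have "(\<Sum>u<n. if L v \<le> L u then a u v else 0) = deg_in E (Aset E n ?i) v"
      unfolding a_def using sum_adj_filter[of "{..<n}" "\<lambda>u. L v \<le> L u" E v] Aeq by simp
    also have "\<dots> \<le> deg_in E (Aset E n ?i) (pick E (Aset E n ?i))"
    proof -
      have "v \<in> Aset E n ?i" using LA[OF _ ip, of v] v by simp
      then show ?thesis using pick_prop[OF Aset_fin, of E n ?i E] by blast
    qed
    also have "\<dots> = card (Aset E n (Suc ?i))" by (rule deg_pick)
    also have "\<dots> \<le> card {u\<in>{..<n}. L v < L u} + q"
    proof (cases "Suc ?i < p")
      case True
      have "Aset E n (Suc ?i) = {u\<in>{..<n}. L v < L u}"
      proof -
        have "\<forall>u<n. (Suc ?i \<le> L u) = (u \<in> Aset E n (Suc ?i))" using LA[OF _ True] by blast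
        moreover have "Aset E n (Suc ?i) \<subseteq> {..<n}" by (rule Aset_sub)
        ultimately show ?thesis by (auto simp del: Aset.simps simp: Suc_le_eq)
      qed
      then show ?thesis by simp
    next
      case False
      then have "Suc ?i = p" using ip by simp
      then show ?thesis using Aset_p_small[OF nb q] by simp
    qed
    finally show "(\<Sum>u<n. if L v \<le> L u then a u v else 0) \<le> card {u\<in>{..<n}. L v < L u} + q" .
  qed
  have "card E + part_cost E p F \<le> (\<Sum>v<n. card {u\<in>{..<n}. L v < L u}) + q * n"
    using twoX Xle by (simp add: sum.distrib mult.commute)
  then show ?thesis unfolding F_def L_def .
qed



definition cyc :: "nat \<Rightarrow> nat \<Rightarrow> bool" where
  "cyc a b \<longleftrightarrow> (a + 1) mod 5 = b \<or> (b + 1) mod 5 = a"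

definition Rel :: "nat \<Rightarrow> (nat \<Rightarrow> nat) \<Rightarrow> nat \<Rightarrow> nat \<Rightarrow> bool" where
  "Rel p l u v \<longleftrightarrow> (u < p + 3 \<and> v < p + 3 \<and> (u < p - 2 \<or> v < p - 2 \<or> cyc (u - (p - 2)) (v - (p - 2))))
     \<or> (p + 3 \<le> u \<and> p + 3 \<le> v \<and> l u \<noteq> l v)"

definition Econ :: "nat \<Rightarrow> nat \<Rightarrow> (nat \<Rightarrow> nat) \<Rightarrow> nat set set" where
  "Econ n p l = {{u, v} | u v. u < n \<and> v < n \<and> u \<noteq> v \<and> Rel p l u v}"

lemma Rel_sym: "Rel p l u v = Rel p l v u"
  unfolding Rel_def cyc_def by auto

lemma mem_Econ: "{u, v} \<in> Econ n p l \<longleftrightarrow> u < n \<and> v < n \<and> u \<noteq> v \<and> Rel p l u v"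
proof
  assume "{u, v} \<in> Econ n p l"
  then obtain u' v' where uv: "{u, v} = {u', v'}" "u' < n" "v' < n" "u' \<noteq> v'" "Rel p l u' v'"
    unfolding Econ_def by blast
  then have "(u = u' \<and> v = v') \<or> (u = v' \<and> v = u')" by (simp add: doubleton_eq_iff)
  then show "u < n \<and> v < n \<and> u \<noteq> v \<and> Rel p l u v" using uv Rel_sym by metis
next
  assume "u < n \<and> v < n \<and> u \<noteq> v \<and> Rel p l u v"
  then show "{u, v} \<in> Econ n p l" unfolding Econ_def by blast
qed

lemma Econ_simple: "simple_graph n (Econ n p l)"
  unfolding simple_graph_def Econ_def by auto

lemma cyc_no_triangle:
  assumes "a < 5" "b < 5" "c < 5" "a \<noteq> b" "a \<noteq> c" "b \<noteq> c" "cyc a b" "cyc a c" "cyc b c"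
  shows False
proof -
  have f: "x < 5 \<Longrightarrow> x = 0 \<or> x = 1 \<or> x = 2 \<or> x = 3 \<or> x = (4::nat)" for x by auto
  show False using f[OF assms(1)] f[OF assms(2)] f[OF assms(3)] assms(4-)
    unfolding cyc_def by (elim disjE) simp_all
qed

lemma Econ_clique:
  assumes p: "p \<ge> 3" and n: "n \<ge> p + 3" and l: "\<forall>v<n. l v < p"
    and C: "C \<subseteq> {..<n}" and cl: "\<forall>u\<in>C. \<forall>v\<in>C. u \<noteq> v \<longrightarrow> {u, v} \<in> Econ n p l"
  shows "card C \<le> p"
proof -
  have fin: "finite C" using C finite_subset by blast
  have R: "Rel p l u v" if "u \<in> C" "v \<in> C" "u \<noteq> v" for u v
    using cl that mem_Econ by blast
  show ?thesis
  proof (cases "\<exists>c\<in>C. c < p + 3")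
    case True
    then obtain c where c: "c \<in> C" "c < p + 3" by blast
    have small: "x < p + 3" if "x \<in> C" for x
    proof (cases "x = c")
      case False then show ?thesis using R[OF c(1) that] c(2) unfolding Rel_def by auto
    qed (use c in simp)
    define C1 where "C1 = C \<inter> {..<p-2}"
    define C2 where "C2 = C - {..<p-2}"
    have "card C1 \<le> p - 2" unfolding C1_def
      by (metis card_lessThan card_mono finite_lessThan inf_le2)
    have "card C2 \<le> 2"
    proof (rule ccontr)
      assume "\<not> card C2 \<le> 2"
      then have "3 \<le> card C2" by simp
      then obtain B where B: "B \<subseteq> C2" "card B = 3" by (meson obtain_subset_with_card_n)
      then obtain a b c where abc: "B = {a,b,c}" "a \<noteq> b" "b \<noteq> c" "a \<noteq> c" by (auto simp: card_3_iff)
      have inC2: "a \<in> C2" "b \<in> C2" "c \<in> C2" using abc B by auto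
      have P: "x \<in> C" "p - 2 \<le> x" "x < p + 3" if "x \<in> C2" for x
        using that small unfolding C2_def by auto
      have cy: "cyc (x - (p-2)) (y - (p-2))" if "x \<in> C2" "y \<in> C2" "x \<noteq> y" for x y
        using R[OF P(1)[OF that(1)] P(1)[OF that(2)] that(3)] P[OF that(1)] P[OF that(2)]
        unfolding Rel_def by auto
      have lt: "x - (p-2) < 5" if "x \<in> C2" for x using P[OF that] p by linarith
      have ne: "x - (p-2) \<noteq> y - (p-2)" if "x \<in> C2" "y \<in> C2" "x \<noteq> y" for x y
        using P[OF that(1)] P[OF that(2)] that(3) by linarith
      show False
        using cyc_no_triangle[OF lt[OF inC2(1)] lt[OF inC2(2)] lt[OF inC2(3)]
            ne[OF inC2(1,2) abc(2)] ne[OF inC2(1,3) abc(4)] ne[OF inC2(2,3) abc(3)]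
            cy[OF inC2(1,2) abc(2)] cy[OF inC2(1,3) abc(4)] cy[OF inC2(2,3) abc(3)]] .
    qed
    have "card C = card C1 + card C2"
      unfolding C1_def C2_def using fin by (metis card_Int_Diff)
    then show ?thesis using \<open>card C1 \<le> p - 2\<close> \<open>card C2 \<le> 2\<close> p by linarith
  next
    case False
    have inj: "inj_on l C"
    proof (rule inj_onI, rule ccontr)
      fix x y assume "x \<in> C" "y \<in> C" "l x = l y" "x \<noteq> y"
      then show False using R[of x y] False unfolding Rel_def by auto
    qed
    have "l ` C \<subseteq> {..<p}" using l C by auto
    then have "card (l ` C) \<le> p" by (metis card_lessThan card_mono finite_lessThan)
    then show ?thesis using card_image[OF inj] by simp
  qed
qed

lemma Econ_not_col:
  assumes p: "p \<ge> 3" and n: "n \<ge> p + 3"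
  shows "\<not> colorable n (Econ n p l) p"
proof
  assume "colorable n (Econ n p l) p"
  then obtain c where c: "\<forall>v<n. c v < p" "\<forall>u v. {u, v} \<in> Econ n p l \<longrightarrow> u \<noteq> v \<longrightarrow> c u \<noteq> c v"
    unfolding colorable_def by blast
  define w where "w k = p - 2 + k" for k
  have ck: "c u \<noteq> c (w k)" if "u < p - 2" "k < 5" for u k
  proof -
    have "{u, w k} \<in> Econ n p l" unfolding mem_Econ Rel_def w_def using that p n by auto
    then show ?thesis using c(2) that unfolding w_def by auto
  qed
  have cuu: "c u \<noteq> c u'" if "u < p - 2" "u' < p - 2" "u \<noteq> u'" for u u'
  proof -
    have "{u, u'} \<in> Econ n p l" unfolding mem_Econ Rel_def using that p n by auto
    then show ?thesis using c(2) that by auto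
  qed
  have cw: "c (w k) \<noteq> c (w k')" if "k < 5" "k' < 5" "cyc k k'" for k k'
  proof -
    have f: "x < 5 \<Longrightarrow> x = 0 \<or> x = 1 \<or> x = 2 \<or> x = 3 \<or> x = (4::nat)" for x by auto
    have "\<not> cyc k k" using f[OF that(1)] by (elim disjE) (simp_all add: cyc_def)
    then have ne: "k \<noteq> k'" using that(3) by auto
    have e: "w k - (p - 2) = k" "w k' - (p - 2) = k'" "w k < p + 3" "w k' < p + 3" "w k \<noteq> w k'"
      unfolding w_def using that ne p by auto
    have "Rel p l (w k) (w k')" unfolding Rel_def using e that(3) by simp
    then have "{w k, w k'} \<in> Econ n p l" unfolding mem_Econ using e n by simp
    then show ?thesis using c(2) ne unfolding w_def by auto
  qed
  define T where "T = {..<p} - c ` {..<p-2}"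
  have inj: "inj_on c {..<p-2}" using cuu by (meson inj_onI lessThan_iff)
  have sub: "c ` {..<p-2} \<subseteq> {..<p}" using c(1) n by auto
  have "card T = 2"
    unfolding T_def using card_Diff_subset[OF finite_imageI[OF finite_lessThan] sub] card_image[OF inj] p
    by simp
  then obtain x y where xy: "x \<in> T" "y \<in> T" "x \<noteq> y" "\<forall>z\<in>T. z = x \<or> z = y"
    unfolding card_2_iff' by blast
  have inT: "c (w k) \<in> T" if "k < 5" for k
  proof -
    have "w k < n" unfolding w_def using that p n by simp
    then have "c (w k) < p" using c(1) by simp
    moreover have "c (w k) \<notin> c ` {..<p-2}" using ck that by force
    ultimately show ?thesis unfolding T_def by simp
  qed
  have d: "c (w k) = x \<or> c (w k) = y" if "k < 5" for k using xy(4) inT[OF that] by blast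
  have "cyc 0 1" "cyc 1 2" "cyc 2 3" "cyc 3 4" "cyc 4 0" unfolding cyc_def by simp_all
  then have "c (w 0) \<noteq> c (w 1)" "c (w 1) \<noteq> c (w 2)" "c (w 2) \<noteq> c (w 3)" "c (w 3) \<noteq> c (w 4)" "c (w 4) \<noteq> c (w 0)"
    using cw by simp_all
  then show False using d[of 0] d[of 1] d[of 2] d[of 3] d[of 4] by auto
qed

lemma Econ_admissible:
  assumes p: "p \<ge> 3" and n: "n \<ge> p + 3" and q: "q \<ge> 1" and l: "\<forall>v<n. l v < p"
  shows "admissible n p q (Econ n p l)"
  unfolding admissible_def
proof (intro conjI)
  show "simple_graph n (Econ n p l)" by (rule Econ_simple)
  have col_n: "colorable n (Econ n p l) n" unfolding colorable_def by (intro exI[of _ id]) auto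
  let ?k = "LEAST k. colorable n (Econ n p l) k"
  have "colorable n (Econ n p l) ?k" using col_n by (rule LeastI)
  show "chromatic_number n (Econ n p l) > p"
  proof (rule ccontr)
    assume "\<not> p < chromatic_number n (Econ n p l)"
    then have "?k \<le> p" unfolding chromatic_number_def by simp
    then have "colorable n (Econ n p l) p"
      using \<open>colorable n (Econ n p l) ?k\<close> unfolding colorable_def by (meson order_less_le_trans)
    then show False using Econ_not_col[OF p n] by blast
  qed
  show "\<not> contains_book n (Econ n p l) p q"
  proof
    assume "contains_book n (Econ n p l) p q"
    then obtain K Q where KQ: "K \<subseteq> {..<n}" "Q \<subseteq> {..<n}" "K \<inter> Q = {}" "card K = p" "card Q = q"
      "\<forall>u\<in>K. \<forall>v\<in>K. u \<noteq> v \<longrightarrow> {u, v} \<in> Econ n p l" "\<forall>u\<in>K. \<forall>v\<in>Q. {u, v} \<in> Econ n p l"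
      unfolding contains_book_def by blast
    have "Q \<noteq> {}" using KQ(5) q by auto
    then obtain z where z: "z \<in> Q" by blast
    have zK: "z \<notin> K" using z KQ(3) by blast
    have finK: "finite K" by (rule card_ge_0_finite) (use KQ(4) p in simp)
    have "card (insert z K) \<le> p"
    proof (rule Econ_clique[OF p n l])
      show "insert z K \<subseteq> {..<n}" using KQ z by blast
      show "\<forall>u\<in>insert z K. \<forall>v\<in>insert z K. u \<noteq> v \<longrightarrow> {u, v} \<in> Econ n p l"
        using KQ(6,7) z by (auto simp: insert_commute)
    qed
    then show False using card_insert_disjoint[OF finK zK] KQ(4) by simp
  qed
qed

lemma Econ_count:
  assumes p: "p \<ge> 3" and n: "n \<ge> p + 3"
  shows "(\<Sum>v<n. \<Sum>u<n. if l u \<noteq> l v then 1 else 0) \<le> 2 * card (Econ n p l) + 2 * ((p + 3) * n)"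
proof -
  let ?s = "p + 3"
  let ?E = "Econ n p l"
  have pt: "(if l u \<noteq> l v then 1 else 0) \<le> adjE ?E u v + ((if u < ?s then 1 else 0) + (if v < ?s then 1 else 0))"
    if "u < n" "v < n" for u v
  proof (cases "l u \<noteq> l v \<and> ?s \<le> u \<and> ?s \<le> v")
    case True
    then have "{u, v} \<in> ?E \<and> u \<noteq> v" unfolding mem_Econ Rel_def using that by auto
    then show ?thesis unfolding adjE_def using True by simp
  qed auto
  have cnt: "(\<Sum>u<n. if u < ?s then 1 else 0) = ?s"
  proof -
    have "(\<Sum>u<n. if u < ?s then 1 else (0::nat)) = card {u\<in>{..<n}. u < ?s}"
      by (simp add: sum.If_cases Int_def)
    also have "{u\<in>{..<n}. u < ?s} = {..<?s}" using n by auto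
    finally show ?thesis by simp
  qed
  have "(\<Sum>v<n. \<Sum>u<n. if l u \<noteq> l v then 1 else 0)
      \<le> (\<Sum>v<n. \<Sum>u<n. adjE ?E u v + ((if u < ?s then 1 else 0) + (if v < ?s then 1 else 0)))"
    by (intro sum_mono pt) auto
  also have "\<dots> = (\<Sum>v<n. \<Sum>u<n. adjE ?E u v) + (\<Sum>v<n. \<Sum>u<n. if u < ?s then 1 else 0)
      + (\<Sum>v<n. \<Sum>u<n. if v < ?s then 1 else 0)"
    by (simp add: sum.distrib)
  also have "(\<Sum>v<n. \<Sum>u<n. if v < ?s then 1 else (0::nat)) = (\<Sum>u<n. \<Sum>v<n. if v < ?s then 1 else 0)"
    by (rule sum.swap)
  also have "(\<Sum>v<n. \<Sum>u<n. adjE ?E u v) = 2 * card ?E"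
    by (rule double_sum_adj[OF Econ_simple])
  finally show ?thesis using cnt by (simp add: algebra_simps)
qed

lemma sum_neq_split:
  fixes l :: "nat \<Rightarrow> nat"
  shows "(\<Sum>v<n. \<Sum>u<n. if l u \<noteq> l v then 1 else 0) = 2 * (\<Sum>v<n. card {u\<in>{..<n}. l v < l u})"
proof -
  have "(\<Sum>v<n. \<Sum>u<n. if l u \<noteq> l v then 1 else 0)
     = (\<Sum>v<n. \<Sum>u<n. (if l v < l u then 1 else 0) + (if l u < l v then 1 else (0::nat)))"
    by (intro sum.cong refl) auto
  also have "\<dots> = (\<Sum>v<n. \<Sum>u<n. if l v < l u then 1 else 0) + (\<Sum>v<n. \<Sum>u<n. if l u < l v then 1 else (0::nat))"
    by (simp add: sum.distrib)
  also have "(\<Sum>v<n. \<Sum>u<n. if l u < l v then 1 else (0::nat)) = (\<Sum>v<n. \<Sum>u<n. if l v < l u then 1 else 0)"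
    by (rule sum.swap)
  also have "(\<Sum>v<n. \<Sum>u<n. if l v < l u then 1 else (0::nat)) = (\<Sum>v<n. card {u\<in>{..<n}. l v < l u})"
    by (simp add: sum.If_cases Int_def)
  finally show ?thesis by simp
qed



lemma pc_bound:
  assumes p: "p \<ge> 3" and q: "q \<ge> 1" and n: "n \<ge> p + 3" and G: "in_GG n p q E"
    and V: "optimal_partition n E p V"
  shows "part_cost E p V \<le> (p + q + 3) * n"
proof -
  have sg: "simple_graph n E" and nb: "\<not> contains_book n E p q"
    and mx: "\<And>E'. admissible n p q E' \<Longrightarrow> card E' \<le> card E"
    using G unfolding in_GG_def admissible_def by auto
  define L where "L = lev E n p"
  define F where "F i = {v\<in>{..<n}. L v = i}" for i
  define Y where "Y = (\<Sum>v<n. card {u\<in>{..<n}. L v < L u})"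
  have p1: "p \<ge> 1" using p by simp
  have Lp: "\<forall>v<n. L v < p" using lev_props(1)[OF _ p1] unfolding L_def by blast
  have f: "card E + part_cost E p F \<le> Y + q * n"
    using furedi[OF sg nb q p1] unfolding F_def L_def Y_def .
  have "2 * Y \<le> 2 * card (Econ n p L) + 2 * ((p + 3) * n)"
    using Econ_count[OF p n, of L] sum_neq_split[of L n] unfolding Y_def by simp
  moreover have "card (Econ n p L) \<le> card E" by (rule mx[OF Econ_admissible[OF p n q Lp]])
  ultimately have "Y \<le> card E + (p + 3) * n" by simp
  with f have pcF: "part_cost E p F \<le> (p + q + 3) * n" by (simp add: algebra_simps)
  have "is_partition n p F"
    unfolding is_partition_def F_def using Lp by auto
  then have "part_cost E p V \<le> part_cost E p F" using V unfolding optimal_partition_def by blast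
  with pcF show ?thesis by simp
qed

lemma W_bound:
  fixes \<eta> :: real
  assumes sg: "simple_graph n E" and V: "is_partition n p V" and eta: "\<eta> > 0" and n: "n > 0"
  shows "real (card (\<Union>i<p. {v \<in> V i. real (deg_in E (V i) v) \<ge> 2 * \<eta> * real n})) * \<eta>
         \<le> real (part_cost E p V) / real n"
proof -
  define W where "W i = {v \<in> V i. real (deg_in E (V i) v) \<ge> 2 * \<eta> * real n}" for i
  have Vsub: "V i \<subseteq> {..<n}" if "i < p" for i using V that unfolding is_partition_def by blast
  have finV: "finite (V i)" if "i < p" for i using Vsub[OF that] finite_subset by blast
  have Wi: "real (card (W i)) * (2 * \<eta> * real n) \<le> 2 * real (edges_in E (V i))" if "i < p" for i
  proof -
    have "real (card (W i)) * (2 * \<eta> * real n) = (\<Sum>v\<in>W i. 2 * \<eta> * real n)" by simp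
    also have "\<dots> \<le> (\<Sum>v\<in>W i. real (deg_in E (V i) v))"
      by (rule sum_mono) (simp add: W_def)
    also have "\<dots> \<le> (\<Sum>v\<in>V i. real (deg_in E (V i) v))"
      by (rule sum_mono2[OF finV[OF that]]) (auto simp: W_def)
    also have "\<dots> = real (\<Sum>v\<in>V i. deg_in E (V i) v)" by simp
    also have "\<dots> = 2 * real (edges_in E (V i))"
      using handshake[OF finV[OF that] simple_card2[OF sg]] by simp
    finally show ?thesis .
  qed
  have "real (card (\<Union>i<p. W i)) \<le> real (\<Sum>i<p. card (W i))"
    using card_UN_le[of "{..<p}" W] by (simp only: of_nat_le_iff finite_lessThan simp_thms)
  then have "real (card (\<Union>i<p. W i)) * (2 * \<eta> * real n) \<le> (\<Sum>i<p. real (card (W i))) * (2 * \<eta> * real n)"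
    using eta n by (intro mult_right_mono) auto
  also have "\<dots> = (\<Sum>i<p. real (card (W i)) * (2 * \<eta> * real n))" by (simp add: sum_distrib_right)
  also have "\<dots> \<le> (\<Sum>i<p. 2 * real (edges_in E (V i)))" by (rule sum_mono) (use Wi in simp)
  also have "\<dots> = 2 * real (part_cost E p V)" unfolding part_cost_def by (simp add: sum_distrib_left)
  finally have "real (card (\<Union>i<p. W i)) * \<eta> * real n \<le> real (part_cost E p V)" by simp
  then show ?thesis unfolding W_def using n by (simp add: field_simps)
qed

theorem lemma3p3:
  fixes p q :: nat and \<eta> :: real
  assumes "p \<ge> 3" and "q \<ge> 1" and "0 < \<eta>" and "\<eta> < 1 / (7 * real p ^ 5 * real q)"
  shows "\<exists>N. \<forall>n\<ge>N. \<forall>E V.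
      in_GG n p q E \<and>
      (\<forall>F. in_GG n p q F \<longrightarrow> min_degree n E \<le> min_degree n F) \<and>
      optimal_partition n E p V \<longrightarrow>
      real (card (\<Union>i<p. {v \<in> V i. real (deg_in E (V i) v) \<ge> 2 * \<eta> * real n})) \<le> \<eta> * real n / 2"
proof -
  define C where "C = p + q + 3"
  define N where "N = max (p + 3) (nat \<lceil>2 * real C / \<eta>^2\<rceil>)"
  show ?thesis
  proof (intro exI[of _ N] allI impI)
    fix n E V
    assume n: "N \<le> n"
    assume H: "in_GG n p q E \<and> (\<forall>F. in_GG n p q F \<longrightarrow> min_degree n E \<le> min_degree n F) \<and> optimal_partition n E p V"
    have n3: "n \<ge> p + 3" using n unfolding N_def by simp
    have n0: "n > 0" using n3 by simp
    have nC: "real n \<ge> 2 * real C / \<eta>^2"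
    proof -
      have "nat \<lceil>2 * real C / \<eta>^2\<rceil> \<le> n" using n unfolding N_def by simp
      then have "real (nat \<lceil>2 * real C / \<eta>^2\<rceil>) \<le> real n" by (simp only: of_nat_le_iff)
      moreover have "2 * real C / \<eta>^2 \<le> real (nat \<lceil>2 * real C / \<eta>^2\<rceil>)" by (rule real_nat_ceiling_ge)
      ultimately show ?thesis by linarith
    qed
    then have nC': "2 * real C \<le> \<eta>^2 * real n" using assms(3) by (simp add: field_simps)
    have sg: "simple_graph n E" using H unfolding in_GG_def admissible_def by blast
    have Vp: "is_partition n p V" using H unfolding optimal_partition_def by blast
    have pc: "part_cost E p V \<le> C * n" using pc_bound[OF assms(1,2) n3] H unfolding C_def by blast
    let ?W = "real (card (\<Union>i<p. {v \<in> V i. real (deg_in E (V i) v) \<ge> 2 * \<eta> * real n}))"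
    have "?W * \<eta> \<le> real (part_cost E p V) / real n" by (rule W_bound[OF sg Vp assms(3) n0])
    also have "\<dots> \<le> real C"
      using pc n0 by (simp add: divide_le_eq of_nat_mult[symmetric] del: of_nat_mult)
    also have "\<dots> \<le> (\<eta> * real n / 2) * \<eta>" using nC' by (simp add: power2_eq_square field_simps)
    finally show "?W \<le> \<eta> * real n / 2" using assms(3) by (simp add: mult_le_cancel_right mult.commute)
  qed
qed

end
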